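(* Let $\lambda\in\mathbb{R}$. Let $\psi\in C^\infty\big(\mathbb{R}^n\times(\mathbb{R}^n\setminus\{0\})\big)$ be positively homogeneous of degree $\lambda$ in $\xi$ and satisfy $\psi(x+\tau\xi,\xi)=\psi(x,\xi)$ for all $\tau\in\mathbb{R}$. Let $\varphi$ be the restriction of $\psi$ to $T\mathbb{S}^{n-1}$. Then for every integer $k\ge1$ and all indices $1\le i_1,j_1,\dots,i_k,j_k\le n$, $$(J_{i_1j_1}\cdots J_{i_kj_k}\psi)|_{T\mathbb{S}^{n-1}}=E_1E_2\cdots E_k\varphi,$$ where $$E_l=\mathcal{J}_{i_lj_l}-c_l(\lambda,k)\big(\xi_{i_l}X_{j_l}-\xi_{j_l}X_{i_l}\big),\qquad c_l(\lambda,k)=\lambda-k+l+1,$$ and the composition is taken with $E_1$ leftmost.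
   Context: $T\mathbb{S}^{n-1}=\{(x,\xi):|\xi|=1,\ \langle x,\xi\rangle=0\}$. Positive homogeneity of degree $\lambda$ in $\xi$ means $\psi(x,c\xi)=c^\lambda\psi(x,\xi)$ for $c>0$. The John operators are $J_{ij}=\partial^2/\partial x^i\partial\xi^j-\partial^2/\partial x^j\partial\xi^i$. Define vector fields on $\mathbb{R}^n\times\mathbb{R}^n$ (summation over $p$) $$\tilde X_i=\partial/\partial x^i-\xi_i\xi^p\,\partial/\partial x^p,\qquad \tilde\Xi_i=\partial/\partial\xi^i-x_i\xi^p\,\partial/\partial x^p-\xi_i\xi^p\,\partial/\partial\xi^p.$$ These are tangent to $T\mathbb{S}^{n-1}$; $X_i,\Xi_i$ are their restrictions, and $\mathcal{J}_{ij}=X_i\Xi_j-X_j\Xi_i$. Here $\xi_i=\xi^i$ acts by multiplication. *)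

theory Defs
  imports "HOL-Analysis.Analysis"
begin

text \<open>Points of R^n x R^n are pairs (x, xi) of type real^'n \<times> real^'n;
 indices 1..n are elements of the finite type 'n.\<close>

type_synonym 'n pt = "(real ^ 'n) \<times> (real ^ 'n)"

definition pd :: "'n::finite pt \<Rightarrow> ('n pt \<Rightarrow> real) \<Rightarrow> ('n pt \<Rightarrow> real)" where
  "pd v f = (\<lambda>p. frechet_derivative f (at p) v)"

fun Ck :: "nat \<Rightarrow> 'n::finite pt set \<Rightarrow> ('n pt \<Rightarrow> real) \<Rightarrow> bool" where
  "Ck 0 U f = continuous_on U f"
| "Ck (Suc k) U f = (f differentiable_on U \<and> (\<forall>v. Ck k U (pd v f)))"

definition smooth_on :: "'n::finite pt set \<Rightarrow> ('n pt \<Rightarrow> real) \<Rightarrow> bool" where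
  "smooth_on U f = (\<forall>k. Ck k U f)"

definition ex :: "'n::finite \<Rightarrow> 'n pt" where "ex i = (axis i 1, 0)"
definition eXi :: "'n::finite \<Rightarrow> 'n pt" where "eXi i = (0, axis i 1)"

definition John :: "'n::finite \<Rightarrow> 'n \<Rightarrow> ('n pt \<Rightarrow> real) \<Rightarrow> ('n pt \<Rightarrow> real)" where
  "John i j f = (\<lambda>p. pd (ex i) (pd (eXi j) f) p - pd (ex j) (pd (eXi i) f) p)"

fun John_comp :: "('n::finite \<times> 'n) list \<Rightarrow> ('n pt \<Rightarrow> real) \<Rightarrow> ('n pt \<Rightarrow> real)" where
  "John_comp [] f = f"
| "John_comp ((i,j) # ps) f = John i j (John_comp ps f)"

definition TS :: "'n::finite pt set" where
  "TS = {(x, xi). norm xi = 1 \<and> inner x xi = 0}"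

definition Xt :: "'n::finite \<Rightarrow> 'n pt \<Rightarrow> 'n pt" where
  "Xt i = (\<lambda>(x, xi). (axis i 1 - (xi $ i) *\<^sub>R xi, 0))"

definition Xit :: "'n::finite \<Rightarrow> 'n pt \<Rightarrow> 'n pt" where
  "Xit i = (\<lambda>(x, xi). (- (x $ i) *\<^sub>R xi, axis i 1 - (xi $ i) *\<^sub>R xi))"

text \<open>Only values of f
 on TS matter; on tangent vectors this derivative is uniquely determined.\<close>
definition vf_act :: "('n::finite pt \<Rightarrow> 'n pt) \<Rightarrow> ('n pt \<Rightarrow> real) \<Rightarrow> ('n pt \<Rightarrow> real)" where
  "vf_act V f = (\<lambda>p. (SOME f'. (f has_derivative f') (at p within TS)) (V p))"

abbreviation X :: "'n::finite \<Rightarrow> ('n pt \<Rightarrow> real) \<Rightarrow> ('n pt \<Rightarrow> real)" where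
  "X i \<equiv> vf_act (Xt i)"
abbreviation Xi :: "'n::finite \<Rightarrow> ('n pt \<Rightarrow> real) \<Rightarrow> ('n pt \<Rightarrow> real)" where
  "Xi i \<equiv> vf_act (Xit i)"

definition John_TS :: "'n::finite \<Rightarrow> 'n \<Rightarrow> ('n pt \<Rightarrow> real) \<Rightarrow> ('n pt \<Rightarrow> real)" where
  "John_TS i j f = (\<lambda>p. X i (Xi j f) p - X j (Xi i f) p)"

definition Eop :: "real \<Rightarrow> nat \<Rightarrow> nat \<Rightarrow> 'n::finite \<Rightarrow> 'n \<Rightarrow> ('n pt \<Rightarrow> real) \<Rightarrow> ('n pt \<Rightarrow> real)" where
  "Eop lam k l i j f = (\<lambda>p. John_TS i j f p
      - (lam - real k + real l + 1) * ((snd p) $ i * X j f p - (snd p) $ j * X i f p))"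

fun Eseq :: "real \<Rightarrow> nat \<Rightarrow> nat \<Rightarrow> ('n::finite \<times> 'n) list \<Rightarrow> ('n pt \<Rightarrow> real) \<Rightarrow> ('n pt \<Rightarrow> real)" where
  "Eseq lam k l [] f = f"
| "Eseq lam k l ((i,j) # ps) f = Eop lam k l i j (Eseq lam k (Suc l) ps f)"

end

theory Submission
  imports Defs
begin


definition Om :: "'n::finite pt set" where "Om = UNIV \<times> (UNIV - {0})"

lemma open_Om: "open Om"
  unfolding Om_def by (intro open_Times open_Diff) auto

lemma fd_cong:
  assumes "open U" "x \<in> U" "\<And>y. y \<in> U \<Longrightarrow> f y = g y"
  shows "frechet_derivative f (at x) = frechet_derivative g (at x)"
proof -
  have "\<And>f'. (f has_derivative f') (at x) \<longleftrightarrow> (g has_derivative f') (at x)"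
  proof
    fix f' assume "(f has_derivative f') (at x)"
    then show "(g has_derivative f') (at x)"
      by (rule has_derivative_transform_within_open[OF _ assms(1,2)]) (simp add: assms(3))
  next
    fix f' assume "(g has_derivative f') (at x)"
    then show "(f has_derivative f') (at x)"
      by (rule has_derivative_transform_within_open[OF _ assms(1,2)]) (simp add: assms(3))
  qed
  then show ?thesis unfolding frechet_derivative_def by simp
qed

lemma diff_cong:
  assumes "open U" "\<And>y. y \<in> U \<Longrightarrow> f y = g y" "f differentiable_on U"
  shows "g differentiable_on U"
  unfolding differentiable_on_eq_differentiable_at[OF assms(1)]
proof
  fix x assume x: "x \<in> U"
  then obtain f' where "(f has_derivative f') (at x)"
    using assms(3) differentiable_on_eq_differentiable_at[OF assms(1)] differentiable_def by blast
  then have "(g has_derivative f') (at x)"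
    by (rule has_derivative_transform_within_open[OF _ assms(1) x]) (simp add: assms(2))
  then show "g differentiable at x" unfolding differentiable_def by blast
qed

lemma Ck_Suc_pd: "Ck (Suc k) U f \<Longrightarrow> Ck k U (pd v f)"
  by (simp only: Ck.simps)

lemma Ck_Suc_d: "Ck (Suc k) U f \<Longrightarrow> f differentiable_on U"
  by (simp only: Ck.simps)

lemma Ck_SucI: "f differentiable_on U \<Longrightarrow> (\<And>v. Ck k U (pd v f)) \<Longrightarrow> Ck (Suc k) U f"
  by (simp only: Ck.simps simp_thms)

lemma Ck_cong:
  assumes "open U" "\<And>y. y \<in> U \<Longrightarrow> f y = g y" "Ck k U f"
  shows "Ck k U g"
  using assms(2,3)
proof (induction k arbitrary: f g)
  case 0
  then show ?case using continuous_on_cong[of U U f g] by simp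
next
  case (Suc k)
  have d: "g differentiable_on U"
    using Suc.prems diff_cong[OF assms(1)] Ck_Suc_d by blast
  have "Ck k U (pd v g)" for v
  proof -
    have "Ck k U (pd v f)" using Suc.prems Ck_Suc_pd by blast
    moreover have "\<And>y. y \<in> U \<Longrightarrow> pd v f y = pd v g y"
      unfolding pd_def using fd_cong[OF assms(1)] Suc.prems(1) by metis
    ultimately show ?thesis using Suc.IH[of "pd v f" "pd v g"] by simp
  qed
  then show ?case using d by (rule Ck_SucI[rotated])
qed

lemma Ck_diff:
  assumes "open U" "Ck k U f" "Ck k U g"
  shows "Ck k U (\<lambda>x. f x - g x)"
  using assms(2,3)
proof (induction k arbitrary: f g)
  case 0
  then show ?case by (simp add: continuous_on_diff)
next
  case (Suc k)
  have df: "f differentiable_on U" and dg: "g differentiable_on U" using Suc.prems Ck_Suc_d by auto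
  have d: "(\<lambda>x. f x - g x) differentiable_on U"
    using df dg by (rule differentiable_on_diff)
  have "Ck k U (pd v (\<lambda>x. f x - g x))" for v
  proof -
    have "Ck k U (\<lambda>x. pd v f x - pd v g x)" using Suc.prems Suc.IH[of "pd v f" "pd v g"] Ck_Suc_pd[of k U f v] Ck_Suc_pd[of k U g v] by simp
    moreover have "pd v f y - pd v g y = pd v (\<lambda>x. f x - g x) y" if "y \<in> U" for y
    proof -
      have "f differentiable at y" "g differentiable at y"
        using df dg that differentiable_on_eq_differentiable_at[OF assms(1)] by auto
      then have "((\<lambda>x. f x - g x) has_derivative (\<lambda>h. frechet_derivative f (at y) h - frechet_derivative g (at y) h)) (at y)"
        by (intro has_derivative_diff) (auto simp: frechet_derivative_works)
      then show ?thesis unfolding pd_def by (simp add: frechet_derivative_at[symmetric])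
    qed
    ultimately show ?thesis using Ck_cong[OF assms(1), of "\<lambda>x. pd v f x - pd v g x" "pd v (\<lambda>x. f x - g x)"] by simp
  qed
  then show ?case using d by (rule Ck_SucI[rotated])
qed

lemma smooth_pd: "smooth_on U f \<Longrightarrow> smooth_on U (pd v f)"
  unfolding smooth_on_def using Ck_Suc_pd by blast

lemma smooth_diff: "open U \<Longrightarrow> smooth_on U f \<Longrightarrow> smooth_on U g \<Longrightarrow> smooth_on U (\<lambda>x. f x - g x)"
  unfolding smooth_on_def by (intro allI Ck_diff) auto

lemma smooth_John: "open U \<Longrightarrow> smooth_on U f \<Longrightarrow> smooth_on U (John i j f)"
  unfolding John_def by (intro smooth_diff smooth_pd)

lemma smooth_differentiable_on: "smooth_on U f \<Longrightarrow> f differentiable_on U"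
  unfolding smooth_on_def using Ck_Suc_d by blast

lemma smooth_differentiable: "open U \<Longrightarrow> smooth_on U f \<Longrightarrow> x \<in> U \<Longrightarrow> f differentiable at x"
  using smooth_differentiable_on differentiable_on_eq_differentiable_at by blast

lemma smooth_cont: "smooth_on U f \<Longrightarrow> continuous_on U f"
  unfolding smooth_on_def using Ck.simps(1) by blast

lemma smooth_hasd: "open U \<Longrightarrow> smooth_on U f \<Longrightarrow> x \<in> U \<Longrightarrow> (f has_derivative (\<lambda>v. pd v f x)) (at x)"
proof -
  assume "open U" "smooth_on U f" "x \<in> U"
  then have "f differentiable at x" by (rule smooth_differentiable)
  then have "(f has_derivative frechet_derivative f (at x)) (at x)" by (simp add: frechet_derivative_works)
  moreover have "(\<lambda>v. pd v f x) = frechet_derivative f (at x)" unfolding pd_def by simp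
  ultimately show ?thesis by simp
qed


lemma line_deriv:
  assumes "(f has_derivative f') (at (q + t *\<^sub>R u))"
  shows "((\<lambda>s. f (q + s *\<^sub>R u)) has_real_derivative f' u) (at t)"
proof -
  have l: "((\<lambda>s. q + s *\<^sub>R u) has_derivative (\<lambda>s. s *\<^sub>R u)) (at t)"
    by (auto intro!: derivative_eq_intros)
  have c: "((f \<circ> (\<lambda>s. q + s *\<^sub>R u)) has_derivative (f' \<circ> (\<lambda>s. s *\<^sub>R u))) (at t)"
    using diff_chain_at[OF l assms] .
  have bl: "linear f'" using assms has_derivative_linear by blast
  have "(f' \<circ> (\<lambda>s. s *\<^sub>R u)) = (*) (f' u)"
    by (auto simp: fun_eq_iff linear_scale[OF bl])
  with c show ?thesis unfolding has_field_derivative_def by (simp add: comp_def)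
qed

lemma dir_deriv:
  assumes "f differentiable at q" "(g has_real_derivative b) (at 0)"
    "\<And>s. \<bar>s\<bar> < 1 \<Longrightarrow> f (q + s *\<^sub>R u) = g s"
  shows "pd u f q = b"
proof -
  have "(f has_derivative (\<lambda>v. pd v f q)) (at (q + 0 *\<^sub>R u))"
    using assms(1) unfolding pd_def by (simp add: frechet_derivative_works[symmetric])
  then have "((\<lambda>s. f (q + s *\<^sub>R u)) has_real_derivative pd u f q) (at 0)" by (rule line_deriv)
  then have "(g has_real_derivative pd u f q) (at 0)"
    by (rule has_field_derivative_transform_within_open[where S="ball 0 1"]) (auto simp: assms(3))
  then show ?thesis using assms(2) DERIV_unique by blast
qed

lemma pd_linear: "f differentiable at y \<Longrightarrow> linear (\<lambda>v. pd v f y)"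
  unfolding pd_def using frechet_derivative_works has_derivative_linear
  by (metis eta_contract_eq)

lemma inv_deriv:
  fixes L :: "'n::finite pt \<Rightarrow> 'n pt"
  assumes "linear L" "open U" "q \<in> U" "\<And>y. y \<in> U \<Longrightarrow> F1 (L y) = F2 y"
    "F1 differentiable at (L q)" "(F2 has_derivative D2) (at q)"
  shows "pd (L v) F1 (L q) = D2 v"
proof -
  have "(L has_derivative L) (at q)" using assms(1) by (rule linear_imp_has_derivative)
  then have "((F1 \<circ> L) has_derivative (frechet_derivative F1 (at (L q)) \<circ> L)) (at q)"
    using diff_chain_at assms(5) frechet_derivative_works by blast
  then have "(F2 has_derivative (frechet_derivative F1 (at (L q)) \<circ> L)) (at q)"
    by (rule has_derivative_transform_within_open[OF _ assms(2,3)]) (simp add: assms(4))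
  then have "frechet_derivative F1 (at (L q)) \<circ> L = D2" using assms(6) has_derivative_unique by blast
  then show ?thesis unfolding pd_def by (metis comp_apply)
qed


lemma hasd_on:
  assumes "open S" "f differentiable_on S" "y \<in> S"
  shows "(f has_derivative (\<lambda>w. pd w f y)) (at y)"
proof -
  have "f differentiable at y" using assms differentiable_on_eq_differentiable_at by blast
  then show ?thesis unfolding pd_def by (simp add: frechet_derivative_works[symmetric])
qed

lemma sym_aux:
  fixes f :: "'n::finite pt \<Rightarrow> real"
  assumes S: "open S" and df: "f differentiable_on S" and du: "(pd u f) differentiable_on S"
    and s: "s > 0" and sub: "cball q (s * (norm u + norm v)) \<subseteq> S"
  shows "\<exists>y. dist y q \<le> s * (norm u + norm v) \<and>
    f (q + s *\<^sub>R u + s *\<^sub>R v) - f (q + s *\<^sub>R u) - f (q + s *\<^sub>R v) + f q = s^2 * pd v (pd u f) y"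
proof -
  have inS: "q + a *\<^sub>R u + b *\<^sub>R v \<in> S" if "0 \<le> a" "a \<le> s" "0 \<le> b" "b \<le> s" for a b
  proof -
    have "norm (a *\<^sub>R u + b *\<^sub>R v) \<le> a * norm u + b * norm v"
      using norm_triangle_ineq[of "a *\<^sub>R u" "b *\<^sub>R v"] that by simp
    also have "\<dots> \<le> s * norm u + s * norm v"
      using that by (intro add_mono mult_right_mono) auto
    finally have "norm (a *\<^sub>R u + b *\<^sub>R v) \<le> s * (norm u + norm v)"
      by (simp add: distrib_left)
    moreover have "dist q (q + (a *\<^sub>R u + b *\<^sub>R v)) = norm (a *\<^sub>R u + b *\<^sub>R v)"
      by (metis add_diff_cancel_left' dist_commute dist_norm)
    ultimately have "dist q (q + (a *\<^sub>R u + b *\<^sub>R v)) \<le> s * (norm u + norm v)" by simp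
    then show ?thesis using sub by (auto simp: add.assoc)
  qed
  define phi where "phi t = f (q + s *\<^sub>R v + t *\<^sub>R u) - f (q + t *\<^sub>R u)" for t
  have dphi: "DERIV phi t :> (pd u f (q + s *\<^sub>R v + t *\<^sub>R u) - pd u f (q + t *\<^sub>R u))"
    if "0 \<le> t" "t \<le> s" for t
  proof -
    have m1: "q + s *\<^sub>R v + t *\<^sub>R u \<in> S" using inS[of t s] that s by (simp add: algebra_simps)
    have m2: "q + t *\<^sub>R u \<in> S" using inS[of t 0] that s by simp
    have "((\<lambda>r. f (q + s *\<^sub>R v + r *\<^sub>R u)) has_real_derivative pd u f (q + s *\<^sub>R v + t *\<^sub>R u)) (at t)"
      using line_deriv[OF hasd_on[OF S df m1]] .
    moreover have "((\<lambda>r. f (q + r *\<^sub>R u)) has_real_derivative pd u f (q + t *\<^sub>R u)) (at t)"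
      using line_deriv[OF hasd_on[OF S df m2]] .
    ultimately show ?thesis unfolding phi_def by (rule DERIV_diff)
  qed
  obtain th where th: "0 < th" "th < s"
    and eq1: "phi s - phi 0 = (s - 0) * (pd u f (q + s *\<^sub>R v + th *\<^sub>R u) - pd u f (q + th *\<^sub>R u))"
    using MVT2[OF s dphi] by blast
  define psi where "psi r = pd u f (q + th *\<^sub>R u + r *\<^sub>R v)" for r
  have dpsi: "DERIV psi r :> pd v (pd u f) (q + th *\<^sub>R u + r *\<^sub>R v)" if "0 \<le> r" "r \<le> s" for r
  proof -
    have m: "q + th *\<^sub>R u + r *\<^sub>R v \<in> S" using inS[of th r] that th by simp
    show ?thesis unfolding psi_def using line_deriv[OF hasd_on[OF S du m]] .
  qed
  obtain rh where rh: "0 < rh" "rh < s"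
    and eq2: "psi s - psi 0 = (s - 0) * pd v (pd u f) (q + th *\<^sub>R u + rh *\<^sub>R v)"
    using MVT2[OF s dpsi] by blast
  define y where "y = q + th *\<^sub>R u + rh *\<^sub>R v"
  have "norm (th *\<^sub>R u + rh *\<^sub>R v) \<le> th * norm u + rh * norm v"
    using norm_triangle_ineq[of "th *\<^sub>R u" "rh *\<^sub>R v"] th rh by simp
  also have "\<dots> \<le> s * norm u + s * norm v"
    using th rh by (intro add_mono mult_right_mono) auto
  finally have dy: "dist y q \<le> s * (norm u + norm v)"
    by (simp add: y_def dist_norm add.assoc distrib_left)
  have "psi s - psi 0 = pd u f (q + s *\<^sub>R v + th *\<^sub>R u) - pd u f (q + th *\<^sub>R u)"
    unfolding psi_def by (simp add: algebra_simps)
  then have "phi s - phi 0 = s^2 * pd v (pd u f) y"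
    using eq1 eq2 by (simp add: y_def power2_eq_square)
  moreover have "phi s - phi 0 = f (q + s *\<^sub>R u + s *\<^sub>R v) - f (q + s *\<^sub>R u) - f (q + s *\<^sub>R v) + f q"
    unfolding phi_def by (simp add: algebra_simps)
  ultimately show ?thesis using dy by metis
qed

lemma schwarz:
  fixes f :: "'n::finite pt \<Rightarrow> real"
  assumes S: "open S" and q: "q \<in> S" and df: "f differentiable_on S"
    and du: "(pd u f) differentiable_on S" and dv: "(pd v f) differentiable_on S"
    and cu: "continuous_on S (pd v (pd u f))" and cv: "continuous_on S (pd u (pd v f))"
  shows "pd v (pd u f) q = pd u (pd v f) q"
proof (rule ccontr)
  define a where "a = pd v (pd u f) q"
  define b where "b = pd u (pd v f) q"
  assume "a \<noteq> b"
  define e where "e = \<bar>a - b\<bar> / 2"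
  have e: "e > 0" using \<open>a \<noteq> b\<close> by (simp add: e_def)
  obtain d1 where d1: "d1 > 0" "\<And>y. y \<in> S \<Longrightarrow> dist y q < d1 \<Longrightarrow> dist (pd v (pd u f) y) a < e"
    using cu q e unfolding continuous_on_iff a_def by blast
  obtain d2 where d2: "d2 > 0" "\<And>y. y \<in> S \<Longrightarrow> dist y q < d2 \<Longrightarrow> dist (pd u (pd v f) y) b < e"
    using cv q e unfolding continuous_on_iff b_def by blast
  obtain d0 where d0: "d0 > 0" "ball q d0 \<subseteq> S"
    using S q open_contains_ball by blast
  define d where "d = min d0 (min d1 d2)"
  have d: "d > 0" using d0 d1 d2 by (simp add: d_def)
  define N where "N = norm u + norm v + 1"
  have N: "N > 0" by (simp add: N_def add_nonneg_pos)
  define s where "s = d / (2 * N)"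
  have s: "s > 0" using d N by (simp add: s_def)
  have sN: "s * (norm u + norm v) < d"
  proof -
    have "s * (norm u + norm v) < s * N" using s by (simp add: N_def)
    also have "s * N = d / 2" using N by (simp add: s_def)
    finally show ?thesis using d by simp
  qed
  have sub: "cball q (s * (norm u + norm v)) \<subseteq> S"
    using d0 sN by (auto simp: d_def dist_commute)
  have sub': "cball q (s * (norm v + norm u)) \<subseteq> S" using sub by (simp add: add.commute)
  obtain y1 where y1: "dist y1 q \<le> s * (norm u + norm v)"
    "f (q + s *\<^sub>R u + s *\<^sub>R v) - f (q + s *\<^sub>R u) - f (q + s *\<^sub>R v) + f q = s^2 * pd v (pd u f) y1"
    using sym_aux[OF S df du s sub] by blast
  obtain y2 where y2: "dist y2 q \<le> s * (norm v + norm u)"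
    "f (q + s *\<^sub>R v + s *\<^sub>R u) - f (q + s *\<^sub>R v) - f (q + s *\<^sub>R u) + f q = s^2 * pd u (pd v f) y2"
    using sym_aux[OF S df dv s sub'] by blast
  have "s^2 * pd v (pd u f) y1 = s^2 * pd u (pd v f) y2"
    using y1(2) y2(2) by (simp add: algebra_simps)
  then have eq: "pd v (pd u f) y1 = pd u (pd v f) y2" using s by simp
  have "y1 \<in> S" "dist y1 q < d1" using y1(1) sN d0 by (auto simp: d_def dist_commute)
  then have A: "dist (pd v (pd u f) y1) a < e" by (rule d1(2))
  have "y2 \<in> S" "dist y2 q < d2" using y2(1) sN d0 by (auto simp: d_def dist_commute add.commute)
  then have B: "dist (pd u (pd v f) y2) b < e" by (rule d2(2))
  define c where "c = pd v (pd u f) y1"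
  have A': "\<bar>c - a\<bar> < \<bar>a - b\<bar> / 2" using A unfolding c_def dist_real_def e_def .
  have B': "\<bar>c - b\<bar> < \<bar>a - b\<bar> / 2" using B eq unfolding c_def dist_real_def e_def by simp
  have "\<bar>a - b\<bar> \<le> \<bar>a - c\<bar> + \<bar>c - b\<bar>" using abs_triangle_ineq[of "a - c" "c - b"] by simp
  then have "\<bar>a - b\<bar> \<le> \<bar>c - a\<bar> + \<bar>c - b\<bar>" by (simp add: abs_minus_commute)
  moreover have gen: "\<And>d x y::real. d \<le> x + y \<Longrightarrow> x < d / 2 \<Longrightarrow> y < d / 2 \<Longrightarrow> False"
    by linarith
  ultimately show False using A' B' by blast
qed


definition hom :: "real \<Rightarrow> ('n::finite pt \<Rightarrow> real) \<Rightarrow> bool" where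
  "hom mu H \<longleftrightarrow> (\<forall>x xi c. xi \<noteq> 0 \<longrightarrow> c > 0 \<longrightarrow> H (x, c *\<^sub>R xi) = c powr mu * H (x, xi))"

definition trn :: "('n::finite pt \<Rightarrow> real) \<Rightarrow> bool" where
  "trn H \<longleftrightarrow> (\<forall>x xi tau. xi \<noteq> 0 \<longrightarrow> H (x + tau *\<^sub>R xi, xi) = H (x, xi))"

definition good :: "real \<Rightarrow> ('n::finite pt \<Rightarrow> real) \<Rightarrow> bool" where
  "good mu H \<longleftrightarrow> smooth_on Om H \<and> hom mu H \<and> trn H"

lemma Om_iff: "(x, xi) \<in> Om \<longleftrightarrow> xi \<noteq> 0"
  by (simp add: Om_def)

lemma pd_add: "f differentiable at y \<Longrightarrow> pd (a + b) f y = pd a f y + pd b f y"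
  using linear_add[OF pd_linear] by blast
lemma pd_diff: "f differentiable at y \<Longrightarrow> pd (a - b) f y = pd a f y - pd b f y"
  using linear_diff[OF pd_linear] by blast
lemma pd_scale: "f differentiable at y \<Longrightarrow> pd (c *\<^sub>R a) f y = c * pd a f y"
  using linear_scale[OF pd_linear] by (metis real_scaleR_def)

lemma sm_d: "smooth_on Om H \<Longrightarrow> y \<in> Om \<Longrightarrow> H differentiable at y"
  using smooth_differentiable[OF open_Om] by blast

lemma sm_hasd: "smooth_on Om H \<Longrightarrow> y \<in> Om \<Longrightarrow> (H has_derivative (\<lambda>v. pd v H y)) (at y)"
  using smooth_hasd[OF open_Om] by blast

definition Mc :: "real \<Rightarrow> 'n::finite pt \<Rightarrow> 'n pt" where
  "Mc c = (\<lambda>p. (fst p, c *\<^sub>R snd p))"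

lemma linear_Mc: "linear (Mc c)"
  by (rule linearI) (auto simp: Mc_def algebra_simps)

lemma hom_deriv:
  assumes sm: "smooth_on Om H" and h: "hom mu H" and c: "c > 0" and y: "y \<in> Om"
  shows "pd (Mc c v) H (Mc c y) = c powr mu * pd v H y"
proof -
  have MOm: "Mc c z \<in> Om" if "z \<in> Om" for z
    using that c by (cases z) (auto simp: Mc_def Om_iff)
  show ?thesis
  proof (rule inv_deriv[OF linear_Mc open_Om y])
    show "H (Mc c z) = c powr mu * H z" if "z \<in> Om" for z
      using that h c by (cases z) (auto simp: Mc_def Om_iff hom_def)
    show "H differentiable at (Mc c y)" using sm_d[OF sm MOm[OF y]] .
    show "((\<lambda>z. c powr mu * H z) has_derivative (\<lambda>v. c powr mu * pd v H y)) (at y)"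
      using sm_hasd[OF sm y] by (rule has_derivative_mult_right)
  qed
qed

lemma hom_pdx:
  fixes H :: "'n::finite pt \<Rightarrow> real"
  assumes sm: "smooth_on Om H" and h: "hom mu H"
  shows "hom mu (pd (ex i) H)"
  unfolding hom_def
proof (intro allI impI)
  fix x xi :: "real^'n" and c :: real
  assume xi: "xi \<noteq> 0" and c: "c > 0"
  have "pd (Mc c (ex i)) H (Mc c (x, xi)) = c powr mu * pd (ex i) H (x, xi)"
    using hom_deriv[OF sm h c] xi by (simp add: Om_iff)
  moreover have "Mc c (ex i) = ex i" by (simp add: Mc_def ex_def)
  ultimately show "pd (ex i) H (x, c *\<^sub>R xi) = c powr mu * pd (ex i) H (x, xi)"
    by (simp add: Mc_def)
qed

lemma hom_pdxi:
  fixes H :: "'n::finite pt \<Rightarrow> real"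
  assumes sm: "smooth_on Om H" and h: "hom mu H"
  shows "hom (mu - 1) (pd (eXi j) H)"
  unfolding hom_def
proof (intro allI impI)
  fix x xi :: "real^'n" and c :: real
  assume xi: "xi \<noteq> 0" and c: "c > 0"
  have y: "(x, xi) \<in> Om" using xi by (simp add: Om_iff)
  have e1: "Mc c ((1/c) *\<^sub>R eXi j) = eXi j" using c by (simp add: Mc_def eXi_def)
  have e2: "Mc c (x, xi) = (x, c *\<^sub>R xi)" by (simp add: Mc_def)
  have "pd (eXi j) H (x, c *\<^sub>R xi) = c powr mu * pd ((1/c) *\<^sub>R eXi j) H (x, xi)"
    using hom_deriv[OF sm h c y, of "(1/c) *\<^sub>R eXi j"] unfolding e1 e2 .
  also have "\<dots> = c powr mu * ((1/c) * pd (eXi j) H (x, xi))"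
    using pd_scale[OF sm_d[OF sm y]] by simp
  also have "\<dots> = c powr (mu - 1) * pd (eXi j) H (x, xi)"
    using c by (simp add: powr_diff powr_one)
  finally show "pd (eXi j) H (x, c *\<^sub>R xi) = c powr (mu - 1) * pd (eXi j) H (x, xi)" .
qed

lemma hom_diff: "hom mu A \<Longrightarrow> hom mu B \<Longrightarrow> hom mu (\<lambda>p. A p - B p)"
  unfolding hom_def by (simp add: right_diff_distrib)

lemma hom_John:
  assumes sm: "smooth_on Om H" and h: "hom mu H"
  shows "hom (mu - 1) (John i j H)"
  unfolding John_def
  by (intro hom_diff hom_pdx hom_pdxi smooth_pd sm h)

definition Tt :: "real \<Rightarrow> 'n::finite pt \<Rightarrow> 'n pt" where
  "Tt tau = (\<lambda>p. (fst p + tau *\<^sub>R snd p, snd p))"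

lemma linear_Tt: "linear (Tt tau)"
  by (rule linearI) (auto simp: Tt_def algebra_simps)

lemma TOm: "z \<in> Om \<Longrightarrow> Tt tau z \<in> Om"
  by (cases z) (auto simp: Tt_def Om_iff)

lemma inv_deriv_T:
  assumes sm: "smooth_on Om F1" and y: "y \<in> Om"
    and eq: "\<And>z. z \<in> Om \<Longrightarrow> F1 (Tt tau z) = F2 z"
    and d2: "(F2 has_derivative D2) (at y)"
  shows "pd (Tt tau v) F1 (Tt tau y) = D2 v"
  by (rule inv_deriv[OF linear_Tt open_Om y eq sm_d[OF sm TOm[OF y]] d2])

lemma trn_deriv:
  assumes sm: "smooth_on Om H" and t: "trn H" and y: "y \<in> Om"
  shows "pd (Tt tau v) H (Tt tau y) = pd v H y"
proof (rule inv_deriv_T[OF sm y])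
  show "H (Tt tau z) = H z" if "z \<in> Om" for z
    using that t by (cases z) (auto simp: Tt_def Om_iff trn_def)
  show "(H has_derivative (\<lambda>v. pd v H y)) (at y)" using sm_hasd[OF sm y] .
qed

lemma G_trn:
  assumes sm: "smooth_on Om H" and t: "trn H" and y: "y \<in> Om"
  shows "pd (eXi j) H (Tt tau y) = pd (eXi j) H y - tau * pd (ex j) H y"
proof -
  have "Tt tau (eXi j - tau *\<^sub>R ex j) = eXi j" by (simp add: Tt_def eXi_def ex_def)
  then have "pd (eXi j) H (Tt tau y) = pd (eXi j - tau *\<^sub>R ex j) H y"
    using trn_deriv[OF sm t y, of tau "eXi j - tau *\<^sub>R ex j"] by simp
  also have "\<dots> = pd (eXi j) H y - tau * pd (ex j) H y"
    using pd_diff[OF sm_d[OF sm y]] pd_scale[OF sm_d[OF sm y]] by simp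
  finally show ?thesis .
qed

lemma Tt_ex: "Tt tau (ex i) = ex i"
  by (simp add: Tt_def ex_def)

lemma trn_pdx:
  fixes H :: "'n::finite pt \<Rightarrow> real"
  assumes sm: "smooth_on Om H" and t: "trn H"
  shows "trn (pd (ex i) H)"
  unfolding trn_def
proof (intro allI impI)
  fix x xi :: "real^'n" and tau :: real
  assume xi: "xi \<noteq> 0"
  have y: "(x, xi) \<in> Om" using xi by (simp add: Om_iff)
  show "pd (ex i) H (x + tau *\<^sub>R xi, xi) = pd (ex i) H (x, xi)"
    using trn_deriv[OF sm t y, of tau "ex i"] by (simp add: Tt_ex) (simp add: Tt_def)
qed

lemma trn_John:
  fixes H :: "'n::finite pt \<Rightarrow> real"
  assumes sm: "smooth_on Om H" and t: "trn H"
  shows "trn (John i j H)"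
  unfolding trn_def
proof (intro allI impI)
  fix x xi :: "real^'n" and tau :: real
  assume xi: "xi \<noteq> 0"
  have y: "(x, xi) \<in> Om" using xi by (simp add: Om_iff)
  have key: "pd (ex a) (pd (eXi b) H) (Tt tau (x, xi)) =
      pd (ex a) (pd (eXi b) H) (x, xi) - tau * pd (ex a) (pd (ex b) H) (x, xi)" for a b
  proof -
    have "pd (Tt tau (ex a)) (pd (eXi b) H) (Tt tau (x, xi)) =
       pd (ex a) (pd (eXi b) H) (x, xi) - tau * pd (ex a) (pd (ex b) H) (x, xi)"
    proof (rule inv_deriv_T[OF smooth_pd[OF sm] y])
      show "pd (eXi b) H (Tt tau z) = pd (eXi b) H z - tau * pd (ex b) H z" if "z \<in> Om" for z
        using G_trn[OF sm t that] .
      show "((\<lambda>z. pd (eXi b) H z - tau * pd (ex b) H z) has_derivative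
          (\<lambda>v. pd v (pd (eXi b) H) (x, xi) - tau * pd v (pd (ex b) H) (x, xi))) (at (x, xi))"
        by (intro has_derivative_diff has_derivative_mult_right sm_hasd[OF smooth_pd[OF sm] y])
    qed
    then show ?thesis by (simp add: Tt_ex)
  qed
  have sym: "pd (ex i) (pd (ex j) H) (x, xi) = pd (ex j) (pd (ex i) H) (x, xi)"
    by (rule schwarz[OF open_Om y])
      (auto intro: smooth_differentiable_on smooth_cont smooth_pd sm)
  show "John i j H (x + tau *\<^sub>R xi, xi) = John i j H (x, xi)"
    using key[of i j] key[of j i] sym by (simp add: John_def Tt_def algebra_simps)
qed

lemma good_John: "good mu H \<Longrightarrow> good (mu - 1) (John i j H)"
  unfolding good_def using smooth_John[OF open_Om] hom_John trn_John by blast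

lemma good_comp: "good mu H \<Longrightarrow> good (mu - real (length ps)) (John_comp ps H)"
proof (induction ps)
  case Nil
  then show ?case by simp
next
  case (Cons p ps)
  obtain i j where p: "p = (i, j)" by (cases p)
  have "good (mu - real (length ps) - 1) (John i j (John_comp ps H))"
    using good_John Cons by blast
  then show ?case by (simp add: p algebra_simps)
qed


lemma tangent_unique:
  fixes x xi a b :: "real^'n::finite"
  assumes p: "(x, xi) \<in> TS" and tb: "b \<bullet> xi = 0" and ta: "a \<bullet> xi + x \<bullet> b = 0"
    and d1: "(g has_derivative f1) (at (x, xi) within TS)"
    and d2: "(g has_derivative f2) (at (x, xi) within TS)"
  shows "f1 (a, b) = f2 (a, b)"
proof -
  have xx: "xi \<bullet> xi = 1" and xxi: "x \<bullet> xi = 0" using p by (auto simp: TS_def norm_eq_1)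
  define be where "be = b \<bullet> b"
  have be: "be \<ge> 0" by (simp add: be_def)
  have pos: "1 + t^2 * be > 0" for t :: real using be by (simp add: add_pos_nonneg)
  define cc where "cc t = (1 - t^2 * be) / (1 + t^2 * be)" for t :: real
  define dd where "dd t = 2 * t / (1 + t^2 * be)" for t :: real
  define Xi where "Xi t = cc t *\<^sub>R xi + dd t *\<^sub>R b" for t
  define ee where "ee t = dd t * (x \<bullet> b) + 2 * t * (cc t * (a \<bullet> xi) + dd t * (a \<bullet> b))" for t
  define gam where "gam t = (x + (2 * t) *\<^sub>R a - ee t *\<^sub>R Xi t, Xi t)" for t
  have ee_inner: "ee t = (x + (2 * t) *\<^sub>R a) \<bullet> Xi t" for t
    by (simp add: ee_def Xi_def inner_add_left inner_add_right xxi inner_commute algebra_simps)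
  have unit: "Xi t \<bullet> Xi t = 1" for t
  proof -
    have "Xi t \<bullet> Xi t = (cc t)^2 + (dd t)^2 * be"
      by (simp add: Xi_def inner_add_left inner_add_right xx tb inner_commute be_def power2_eq_square)
    also have "\<dots> = ((1 - t^2*be)^2 + (2*t)^2*be) / (1 + t^2*be)^2"
      unfolding cc_def dd_def by (simp add: power_divide add_divide_distrib)
    also have "(1 - t^2*be)^2 + (2*t)^2*be = (1 + t^2*be)^2"
      by (simp add: power2_eq_square algebra_simps)
    also have "(1 + t^2*be)^2 / (1 + t^2*be)^2 = 1"
      using pos[of t] by simp
    finally show ?thesis .
  qed
  have inTS: "gam t \<in> TS" for t
  proof -
    have "norm (Xi t) = 1" using unit by (simp add: norm_eq_1)
    moreover have "(x + (2 * t) *\<^sub>R a - ee t *\<^sub>R Xi t) \<bullet> Xi t = 0"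
      by (simp add: inner_diff_left ee_inner[symmetric] unit)
    ultimately show ?thesis by (simp add: gam_def TS_def)
  qed
  have g0: "gam 0 = (x, xi)" by (simp add: gam_def Xi_def cc_def dd_def ee_def)
  have dcc: "(cc has_real_derivative 0) (at 0)"
    unfolding cc_def by (auto intro!: derivative_eq_intros)
  have ddd: "(dd has_real_derivative 2) (at 0)"
    unfolding dd_def by (auto intro!: derivative_eq_intros)
  have c0: "cc 0 = 1" and d0: "dd 0 = 0" and e0: "ee 0 = 0"
    by (simp_all add: cc_def dd_def ee_def)
  have dee: "(ee has_real_derivative (2 * (x \<bullet> b) + 2 * (a \<bullet> xi))) (at 0)"
    unfolding ee_def[abs_def] using dcc ddd
    by (auto intro!: derivative_eq_intros simp: c0 d0)
  have dXi: "(Xi has_vector_derivative (2 *\<^sub>R b)) (at 0)"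
    unfolding Xi_def[abs_def] using dcc ddd
    by (auto intro!: derivative_eq_intros simp: c0 d0)
  have ta': "2 * (b \<bullet> x) + 2 * (a \<bullet> xi) = 0" using ta by (simp add: inner_commute)
  have ta'': "2 * (x \<bullet> b) + 2 * (a \<bullet> xi) = 0" using ta by simp
  have dgam: "(gam has_vector_derivative (2 *\<^sub>R a, 2 *\<^sub>R b)) (at 0)"
    unfolding gam_def[abs_def] using dee dXi
    by (auto intro!: derivative_eq_intros simp: e0 ta' ta'')
  then have dgam': "(gam has_derivative (\<lambda>h. h *\<^sub>R (2 *\<^sub>R a, 2 *\<^sub>R b))) (at 0 within UNIV)"
    by (simp add: has_vector_derivative_def)
  have sub: "gam ` UNIV \<subseteq> TS" using inTS by auto
  have c1: "((g \<circ> gam) has_derivative (f1 \<circ> (\<lambda>h. h *\<^sub>R (2 *\<^sub>R a, 2 *\<^sub>R b)))) (at 0)"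
    using diff_chain_within[OF dgam' has_derivative_subset[OF d1[folded g0] sub]] by simp
  have c2: "((g \<circ> gam) has_derivative (f2 \<circ> (\<lambda>h. h *\<^sub>R (2 *\<^sub>R a, 2 *\<^sub>R b)))) (at 0)"
    using diff_chain_within[OF dgam' has_derivative_subset[OF d2[folded g0] sub]] by simp
  have "f1 \<circ> (\<lambda>h. h *\<^sub>R (2 *\<^sub>R a, 2 *\<^sub>R b)) = f2 \<circ> (\<lambda>h. h *\<^sub>R (2 *\<^sub>R a, 2 *\<^sub>R b))"
    using has_derivative_unique[OF c1 c2] .
  then have "f1 (2 *\<^sub>R (a, b)) = f2 (2 *\<^sub>R (a, b))"
    by (metis (no_types, lifting) comp_apply scaleR_one scaleR_Pair)
  moreover have "linear f1" "linear f2" using d1 d2 has_derivative_linear by blast+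
  ultimately have "(2::real) *\<^sub>R f1 (a, b) = (2::real) *\<^sub>R f2 (a, b)"
    using linear_scale[of f1 2 "(a, b)"] linear_scale[of f2 2 "(a, b)"] by simp
  then show ?thesis by simp
qed


lemma vf_act_eq:
  assumes p: "p \<in> TS" and tan1: "snd (V p) \<bullet> snd p = 0"
    and tan2: "fst (V p) \<bullet> snd p + fst p \<bullet> snd (V p) = 0"
    and eq: "\<And>q. q \<in> TS \<Longrightarrow> g q = A q" and dA: "(A has_derivative A') (at p)"
  shows "vf_act V g p = A' (V p)"
proof -
  have "(A has_derivative A') (at p within TS)" using dA by (rule has_derivative_at_withinI)
  then have dg: "(g has_derivative A') (at p within TS)"
    by (rule has_derivative_transform_within[where d=1]) (auto simp: p eq)
  then have ex: "\<exists>f'. (g has_derivative f') (at p within TS)" by blast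
  define f where "f = (SOME f'. (g has_derivative f') (at p within TS))"
  have df: "(g has_derivative f) (at p within TS)" unfolding f_def using someI_ex[OF ex] .
  obtain x xi where pxi: "p = (x, xi)" by (cases p)
  obtain a b where ab: "V p = (a, b)" by (cases "V p")
  have "f (a, b) = A' (a, b)"
    by (rule tangent_unique[where g=g]) (use p tan1 tan2 df dg pxi ab in auto)
  then show ?thesis unfolding vf_act_def f_def[symmetric] by (simp add: ab)
qed

lemma vf_act_local:
  assumes p: "p \<in> TS" and eq: "\<And>q. q \<in> TS \<Longrightarrow> g q = h q"
  shows "vf_act V g p = vf_act V h p"
proof -
  have "\<And>f'. (g has_derivative f') (at p within TS) \<longleftrightarrow> (h has_derivative f') (at p within TS)"
  proof
    fix f' assume "(g has_derivative f') (at p within TS)"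
    then show "(h has_derivative f') (at p within TS)"
      by (rule has_derivative_transform_within[where d=1]) (auto simp: p eq)
  next
    fix f' assume "(h has_derivative f') (at p within TS)"
    then show "(g has_derivative f') (at p within TS)"
      by (rule has_derivative_transform_within[where d=1]) (auto simp: p eq)
  qed
  then show ?thesis unfolding vf_act_def by simp
qed

lemma Eop_local:
  assumes p: "p \<in> TS" and eq: "\<And>q. q \<in> TS \<Longrightarrow> g q = h q"
  shows "Eop lam k l i j g p = Eop lam k l i j h p"
proof -
  have "vf_act (Xit a) g q = vf_act (Xit a) h q" if "q \<in> TS" for a q
    using vf_act_local[OF that eq] .
  then have "vf_act V (vf_act (Xit a) g) p = vf_act V (vf_act (Xit a) h) p" for V a
    using vf_act_local[OF p] by blast
  moreover have "vf_act V g p = vf_act V h p" for V using vf_act_local[OF p eq] .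
  ultimately show ?thesis unfolding Eop_def John_TS_def by simp
qed

lemma Eseq_local:
  assumes "\<And>q. q \<in> TS \<Longrightarrow> g q = h q"
  shows "p \<in> TS \<Longrightarrow> Eseq lam k l ps g p = Eseq lam k l ps h p"
proof (induction ps arbitrary: l p)
  case Nil
  then show ?case using assms by simp
next
  case (Cons ij ps)
  obtain i j where ij: "ij = (i, j)" by (cases ij)
  show ?case unfolding ij Eseq.simps
    by (rule Eop_local[OF Cons.prems]) (rule Cons.IH)
qed

lemma TS_Om: "p \<in> TS \<Longrightarrow> p \<in> Om"
  by (cases p) (auto simp: TS_def Om_iff)

lemma trn_zero:
  assumes sm: "smooth_on Om H" and t: "trn H" and y: "(y1, y2) \<in> Om"
  shows "pd (y2, 0) H (y1, y2) = 0"
proof (rule dir_deriv[OF sm_d[OF sm y]])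
  show "((\<lambda>s. H (y1, y2)) has_real_derivative 0) (at 0)" by (rule DERIV_const)
  show "H ((y1, y2) + s *\<^sub>R (y2, 0)) = H (y1, y2)" for s
    using t y by (simp add: trn_def Om_iff)
qed

lemma G_dir:
  assumes sm: "smooth_on Om H" and t: "trn H" and y: "(y1, y2) \<in> Om"
  shows "pd (y2, 0) (pd (eXi j) H) (y1, y2) = - pd (ex j) H (y1, y2)"
proof (rule dir_deriv[OF sm_d[OF smooth_pd[OF sm] y]])
  show "((\<lambda>s. pd (eXi j) H (y1, y2) - s * pd (ex j) H (y1, y2)) has_real_derivative - pd (ex j) H (y1, y2)) (at 0)"
    by (auto intro!: derivative_eq_intros)
  show "pd (eXi j) H ((y1, y2) + s *\<^sub>R (y2, 0)) = pd (eXi j) H (y1, y2) - s * pd (ex j) H (y1, y2)" for s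
    using G_trn[OF sm t y, of j s] by (simp add: Tt_def)
qed

lemma euler:
  assumes sm: "smooth_on Om H" and h: "hom mu H" and y: "(y1, y2) \<in> Om"
  shows "pd (0, y2) H (y1, y2) = mu * H (y1, y2)"
proof (rule dir_deriv[OF sm_d[OF sm y]])
  have d1: "((\<lambda>s. 1 + s) has_real_derivative 1) (at (0::real))"
    by (auto intro!: derivative_eq_intros)
  have "((\<lambda>s. (1 + s) powr mu) has_real_derivative mu * (1 + 0) powr (mu - 1) * 1) (at 0)"
    using DERIV_chain2[OF has_real_derivative_powr[of "1 + 0" mu] d1] by simp
  then have "((\<lambda>s. (1 + s) powr mu) has_real_derivative mu) (at 0)" by simp
  then show "((\<lambda>s. (1 + s) powr mu * H (y1, y2)) has_real_derivative mu * H (y1, y2)) (at 0)"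
    by (rule DERIV_cmult_right)
  show "H ((y1, y2) + s *\<^sub>R (0, y2)) = (1 + s) powr mu * H (y1, y2)" if "\<bar>s\<bar> < 1" for s
  proof -
    have "1 + s > 0" using that by linarith
    then have "H (y1, (1 + s) *\<^sub>R y2) = (1 + s) powr mu * H (y1, y2)"
      using h y by (simp add: hom_def Om_iff)
    moreover have "(y1, y2) + s *\<^sub>R (0, y2) = (y1, (1 + s) *\<^sub>R y2)" by (simp add: algebra_simps)
    ultimately show ?thesis by simp
  qed
qed


lemma Xt_eq: "Xt i (x, xi) = ex i - (xi $ i) *\<^sub>R (xi, 0)"
  by (simp add: Xt_def ex_def)

lemma Xit_eq: "Xit j (x, xi) = eXi j - (x $ j) *\<^sub>R (xi, 0) - (xi $ j) *\<^sub>R (0, xi)"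
  by (simp add: Xit_def eXi_def)

lemma TS_facts: "(x, xi) \<in> TS \<Longrightarrow> xi \<bullet> xi = 1 \<and> x \<bullet> xi = 0"
  by (auto simp: TS_def norm_eq_1)

lemma Xt_tan:
  assumes "p \<in> TS"
  shows "snd (Xt i p) \<bullet> snd p = 0" "fst (Xt i p) \<bullet> snd p + fst p \<bullet> snd (Xt i p) = 0"
proof -
  obtain x xi where p: "p = (x, xi)" by (cases p)
  have f: "xi \<bullet> xi = 1" "x \<bullet> xi = 0" using TS_facts assms p by auto
  show "snd (Xt i p) \<bullet> snd p = 0" by (simp add: p Xt_def)
  show "fst (Xt i p) \<bullet> snd p + fst p \<bullet> snd (Xt i p) = 0"
    by (simp add: p Xt_def inner_diff_left inner_axis' f)
qed

lemma Xit_tan: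
  assumes "p \<in> TS"
  shows "snd (Xit i p) \<bullet> snd p = 0" "fst (Xit i p) \<bullet> snd p + fst p \<bullet> snd (Xit i p) = 0"
proof -
  obtain x xi where p: "p = (x, xi)" by (cases p)
  have f: "xi \<bullet> xi = 1" "x \<bullet> xi = 0" using TS_facts assms p by auto
  show "snd (Xit i p) \<bullet> snd p = 0" by (simp add: p Xit_def inner_diff_left inner_axis' f)
  show "fst (Xit i p) \<bullet> snd p + fst p \<bullet> snd (Xit i p) = 0"
    by (simp add: p Xit_def inner_diff_left inner_diff_right inner_axis inner_axis' f inner_commute)
qed


lemma PH_lemma:
  fixes H :: "'n::finite pt \<Rightarrow> real"
  assumes sm: "smooth_on Om H" and t: "trn H" and pO: "(x, xi) \<in> Om"
  shows "pd (Xt a (x, xi)) H (x, xi) = pd (ex a) H (x, xi)"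
proof -
  have e1: "pd (Xt a (x, xi)) H (x, xi) = pd (ex a) H (x, xi) - pd ((xi $ a) *\<^sub>R (xi, 0)) H (x, xi)"
    unfolding Xt_eq by (rule pd_diff[OF sm_d[OF sm pO]])
  have e2: "pd ((xi $ a) *\<^sub>R (xi, 0)) H (x, xi) = xi $ a * pd (xi, 0) H (x, xi)"
    by (rule pd_scale[OF sm_d[OF sm pO]])
  show ?thesis unfolding e1 e2 trn_zero[OF sm t pO] by simp
qed

lemma XH_lemma:
  fixes H :: "'n::finite pt \<Rightarrow> real"
  assumes sm: "smooth_on Om H" and t: "trn H" and p: "p \<in> TS" and eq: "\<And>q. q \<in> TS \<Longrightarrow> g q = H q"
  shows "X a g p = pd (ex a) H p"
proof -
  obtain x xi where pxi: "p = (x, xi)" by (cases p)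
  have pO: "(x, xi) \<in> Om" using TS_Om p pxi by simp
  have "X a g p = pd (Xt a p) H p"
    by (rule vf_act_eq[where V="Xt a", OF p Xt_tan[OF p] eq sm_hasd[OF sm TS_Om[OF p]]])
  then show ?thesis using PH_lemma[OF sm t pO, of a] unfolding pxi by simp
qed


lemma XiA_lemma:
  fixes H :: "'n::finite pt \<Rightarrow> real"
  assumes sm: "smooth_on Om H" and t: "trn H" and h: "hom mu H" and q: "q \<in> TS"
    and eq: "\<And>q. q \<in> TS \<Longrightarrow> g q = H q"
  shows "Xi b g q = pd (eXi b) H q - mu * ((snd q $ b) * H q)"
proof -
  obtain q1 q2 where qq: "q = (q1, q2)" by (cases q)
  have qO: "(q1, q2) \<in> Om" using TS_Om q qq by simp
  have "Xi b g q = pd (Xit b q) H q"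
    by (rule vf_act_eq[where V="Xit b", OF q Xit_tan[OF q] eq sm_hasd[OF sm TS_Om[OF q]]])
  also have "\<dots> = pd (eXi b - (q1 $ b) *\<^sub>R (q2, 0)) H (q1, q2) - pd ((q2 $ b) *\<^sub>R (0, q2)) H (q1, q2)"
    unfolding qq Xit_eq by (rule pd_diff[OF sm_d[OF sm qO]])
  also have "pd (eXi b - (q1 $ b) *\<^sub>R (q2, 0)) H (q1, q2) = pd (eXi b) H (q1, q2) - pd ((q1 $ b) *\<^sub>R (q2, 0)) H (q1, q2)"
    by (rule pd_diff[OF sm_d[OF sm qO]])
  also have "pd ((q1 $ b) *\<^sub>R (q2, 0)) H (q1, q2) = (q1 $ b) * pd (q2, 0) H (q1, q2)"
    by (rule pd_scale[OF sm_d[OF sm qO]])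
  also have "pd ((q2 $ b) *\<^sub>R (0, q2)) H (q1, q2) = (q2 $ b) * pd (0, q2) H (q1, q2)"
    by (rule pd_scale[OF sm_d[OF sm qO]])
  also note trn_zero[OF sm t qO]
  also note euler[OF sm h qO]
  finally show ?thesis unfolding qq by simp
qed


lemma bl_snd_nth: "bounded_linear (\<lambda>q::'n::finite pt. snd q $ b)"
  by (rule bounded_linear_compose[OF bounded_linear_vec_nth bounded_linear_snd])

lemma dA_lemma:
  fixes H :: "'n::finite pt \<Rightarrow> real"
  assumes sm: "smooth_on Om H" and p: "p \<in> Om"
  shows "((\<lambda>q. pd (eXi b) H q - mu * ((snd q $ b) * H q)) has_derivative
     (\<lambda>v. pd v (pd (eXi b) H) p - mu * (snd p $ b * pd v H p + snd v $ b * H p))) (at p)"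
proof -
  have d1: "(pd (eXi b) H has_derivative (\<lambda>v. pd v (pd (eXi b) H) p)) (at p)"
    using sm_hasd[OF smooth_pd[OF sm] p] .
  have d2: "(H has_derivative (\<lambda>v. pd v H p)) (at p)" using sm_hasd[OF sm p] .
  have d3: "((\<lambda>q::'n pt. snd q $ b) has_derivative (\<lambda>v. snd v $ b)) (at p)"
    using bounded_linear_imp_has_derivative[OF bl_snd_nth] .
  have "((\<lambda>q. snd q $ b * H q) has_derivative (\<lambda>v. snd p $ b * pd v H p + snd v $ b * H p)) (at p)"
    using has_derivative_mult[OF d3 d2] .
  then have "((\<lambda>q. mu * (snd q $ b * H q)) has_derivative (\<lambda>v. mu * (snd p $ b * pd v H p + snd v $ b * H p))) (at p)"
    by (rule has_derivative_mult_right)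
  from has_derivative_diff[OF d1 this] show ?thesis .
qed


lemma XXi_lemma:
  fixes H :: "'n::finite pt \<Rightarrow> real"
  assumes sm: "smooth_on Om H" and t: "trn H" and h: "hom mu H" and p: "p \<in> TS"
    and eq: "\<And>q. q \<in> TS \<Longrightarrow> g q = H q"
  shows "X a (Xi b g) p = pd (ex a) (pd (eXi b) H) p + snd p $ a * pd (ex b) H p - mu * (snd p $ b * pd (ex a) H p)"
proof -
  obtain x xi where pxi: "p = (x, xi)" by (cases p)
  have pO: "(x, xi) \<in> Om" using TS_Om p pxi by simp
  have XiA: "Xi b g q = pd (eXi b) H q - mu * ((snd q $ b) * H q)" if "q \<in> TS" for q
    using XiA_lemma[OF sm t h that eq] .
  have "X a (Xi b g) p = pd (Xt a p) (pd (eXi b) H) p - mu * (snd p $ b * pd (Xt a p) H p + snd (Xt a p) $ b * H p)"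
    by (rule vf_act_eq[where V="Xt a", OF p Xt_tan[OF p] XiA dA_lemma[OF sm TS_Om[OF p]]])
  also have "pd (Xt a p) (pd (eXi b) H) p = pd (ex a) (pd (eXi b) H) p - pd ((xi $ a) *\<^sub>R (xi, 0)) (pd (eXi b) H) p"
    unfolding pxi Xt_eq by (rule pd_diff[OF sm_d[OF smooth_pd[OF sm] pO]])
  also have "pd ((xi $ a) *\<^sub>R (xi, 0)) (pd (eXi b) H) p = xi $ a * pd (xi, 0) (pd (eXi b) H) (x, xi)"
    unfolding pxi by (rule pd_scale[OF sm_d[OF smooth_pd[OF sm] pO]])
  also note G_dir[OF sm t pO]
  also have "pd (Xt a p) H p = pd (ex a) H p" using PH_lemma[OF sm t pO, of a] unfolding pxi .
  also have "snd (Xt a p) = 0" by (simp add: pxi Xt_def)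
  finally show ?thesis unfolding pxi by simp
qed

lemma base:
  fixes H :: "'n::finite pt \<Rightarrow> real"
  assumes gd: "good mu H" and p: "p \<in> TS" and eq: "\<And>q. q \<in> TS \<Longrightarrow> g q = H q"
  shows "John i j H p = John_TS i j g p - (mu + 1) * ((snd p) $ i * X j g p - (snd p) $ j * X i g p)"
proof -
  have sm: "smooth_on Om H" and h: "hom mu H" and t: "trn H" using gd by (auto simp: good_def)
  have fin: "John i j H p = (pd (ex i) (pd (eXi j) H) p + snd p $ i * pd (ex j) H p - mu * (snd p $ j * pd (ex i) H p))
      - (pd (ex j) (pd (eXi i) H) p + snd p $ j * pd (ex i) H p - mu * (snd p $ i * pd (ex j) H p))
      - (mu + 1) * (snd p $ i * pd (ex j) H p - snd p $ j * pd (ex i) H p)"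
    unfolding John_def by algebra
  have 1: "X i (Xi j g) p = pd (ex i) (pd (eXi j) H) p + snd p $ i * pd (ex j) H p - mu * (snd p $ j * pd (ex i) H p)"
    by (rule XXi_lemma[OF sm t h p eq])
  have 2: "X j (Xi i g) p = pd (ex j) (pd (eXi i) H) p + snd p $ j * pd (ex i) H p - mu * (snd p $ i * pd (ex j) H p)"
    by (rule XXi_lemma[OF sm t h p eq])
  have 3: "X i g p = pd (ex i) H p" by (rule XH_lemma[OF sm t p eq])
  have 4: "X j g p = pd (ex j) H p" by (rule XH_lemma[OF sm t p eq])
  show ?thesis unfolding fin John_TS_def 1 2 3 4 ..
qed


lemma main_ind:
  fixes F :: "'n::finite pt \<Rightarrow> real"
  assumes "\<And>q. q \<in> TS \<Longrightarrow> G q = F q"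
  shows "good mu F \<Longrightarrow> mu = lam - real k + real l + real (length ps) - 1 \<Longrightarrow> p \<in> TS \<Longrightarrow>
    John_comp ps F p = Eseq lam k l ps G p"
proof (induction ps arbitrary: l p)
  case Nil
  then show ?case using assms by simp
next
  case (Cons ij ps)
  obtain i j where ij: "ij = (i, j)" by (cases ij)
  define H where "H = John_comp ps F"
  have gH: "good (mu - real (length ps)) H" unfolding H_def by (rule good_comp[OF Cons.prems(1)])
  have IH: "H q = Eseq lam k (Suc l) ps G q" if "q \<in> TS" for q
    unfolding H_def using Cons.IH[OF Cons.prems(1) _ that] Cons.prems(2) by simp
  have "Eseq lam k l ((i, j) # ps) G p = Eop lam k l i j H p"
    using Eop_local[OF Cons.prems(3), of "Eseq lam k (Suc l) ps G" H] IH by simp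
  also have "\<dots> = John i j H p"
    unfolding Eop_def
    using base[OF gH Cons.prems(3), of H i j] Cons.prems(2) by simp
  finally show ?case by (simp add: ij H_def)
qed


theorem lemma3p2:
  fixes psi :: "(real ^ 'n::finite) \<times> (real ^ 'n) \<Rightarrow> real"
    and lam :: real
    and ps :: "('n \<times> 'n) list"
  assumes smooth: "smooth_on (UNIV \<times> (UNIV - {0})) psi"
    and homog: "\<And>x xi c. xi \<noteq> 0 \<Longrightarrow> c > 0 \<Longrightarrow> psi (x, c *\<^sub>R xi) = c powr lam * psi (x, xi)"
    and transl: "\<And>x xi tau. xi \<noteq> 0 \<Longrightarrow> psi (x + tau *\<^sub>R xi, xi) = psi (x, xi)"
    and k_pos: "length ps \<ge> 1"
  shows "\<forall>p\<in>TS. John_comp ps psi p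
           = Eseq lam (length ps) 1 ps (\<lambda>q. if q \<in> TS then psi q else 0) p"
proof
  fix p :: "'n pt" assume p: "p \<in> TS"
  have gd: "good lam psi"
    unfolding good_def hom_def trn_def Om_def using smooth homog transl by blast
  show "John_comp ps psi p = Eseq lam (length ps) 1 ps (\<lambda>q. if q \<in> TS then psi q else 0) p"
    by (rule main_ind[OF _ gd _ p]) auto
qed


end
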